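(* Let $\Gamma$ be the Coxeter graph of $\mathbb L$ and let $J$ be a set of its vertices spanning an elliptic subgraph $\Gamma_J$ whose connected components have types $A_1$, $D_{2n}$ ($n\ge 2$), $E_7$, $E_8$, and let $\mathbb L^J$ be the orthogonal complement in $\mathbb L$ of the sublattice $\mathbb L_J$ spanned by $J$. Assume that the lattice $\mathbb L$ is achiral, and a $P$-direct $\mathbb Z/3$-reversing $f\in \operatorname{Aut} (P)$ is induced by a symmetry of the graph $\Gamma$ which preserves $\Gamma_J$ invariant. Then $\mathbb L^J$ is also achiral.
   Context: $\mathbb L$ is an even lattice of signature $(n,1)$ whose discriminant group splits as $\operatorname{discr}_2\mathbb L+\operatorname{discr}_3\mathbb L$ with $\operatorname{discr}_2$ of period 2 and $\operatorname{discr}_3\mathbb L=\mathbb Z/3$. Roots: 2-roots $v$ ($v^2=2$) and 6-roots ($v^2=6$, $v\cdot\mathbb L\subset 3\mathbb Z$); their reflections generate a group $W$ acting on $\Lambda=\Upsilon/\mathbb R^*$ and $\Lambda^\#=\Upsilon/\mathbb R_+$, where $\Upsilon=\{p\in\mathbb L\otimes\mathbb R: p^2<0\}$; cells are the fundamental chambers of $W$. For a cell $P\subset\Lambda$ with preimage $P^\#\cup(-P^\#)$ in $\Lambda^\#$, $\operatorname{Aut}(P)$ is its stabilizer in $\operatorname{Aut}(\mathbb L)$; $g\in\operatorname{Aut}(P)$ is $P$-direct if it preserves $P^\#$ (rather than swapping $P^\#$ and $-P^\#$); $g$ is $\mathbb Z/3$-reversing if it acts as $-\operatorname{id}$ on $\operatorname{discr}_3\mathbb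 L$. $\mathbb L$ is achiral if it has an automorphism that is $\mathbb Z/3$-reversing and $P$-direct for some cell $P$, chiral otherwise. The Coxeter graph $\Gamma$ has as vertices the basis $\Phi^b$ of roots defining the walls of $P^\#$ (edges weighted by $4(vw)^2/(v^2w^2)$). Under the hypotheses, $\mathbb L^J$ is again hyperbolic with $\operatorname{discr}_3=\mathbb Z/3$ and 2-part of period 2. *)

theory Defs
  imports "HOL-Analysis.Analysis"
begin

text \<open>The ambient lattice L is the standard lattice Z^n inside real^'n, with the
bilinear form given by a (symmetric, integral) Gram matrix G.  Sublattices
(such as the orthogonal complement of L_J) are subsets M of Z^n equipped with
the restricted form; all notions below are defined relative to such an M.\<close>

definition bform :: "real^'n^'n \<Rightarrow> real^'n \<Rightarrow> real^'n \<Rightarrow> real" where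
  "bform G x y = x \<bullet> (G *v y)"

definition Zn :: "(real^'n) set" where
  "Zn = {x. \<forall>i. x $ i \<in> \<int>}"

definition integral_symmetric :: "real^'n^'n \<Rightarrow> bool" where
  "integral_symmetric G \<longleftrightarrow> transpose G = G \<and> (\<forall>i j. G $ i $ j \<in> \<int>)"

definition even_lattice :: "real^'n^'n \<Rightarrow> (real^'n) set \<Rightarrow> bool" where
  "even_lattice G M \<longleftrightarrow> (\<forall>x\<in>M. bform G x x / 2 \<in> \<int>)"

text \<open>Hyperbolic (signature (n,1)) on the real span of M: there is a vector of negative
square whose orthogonal complement (in span M) is positive definite.\<close>
definition hyperbolic :: "real^'n^'n \<Rightarrow> (real^'n) set \<Rightarrow> bool" where
  "hyperbolic G M \<longleftrightarrow> (\<exists>p\<in>span M. bform G p p < 0 \<and>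
      (\<forall>q\<in>span M. bform G p q = 0 \<longrightarrow> q \<noteq> 0 \<longrightarrow> bform G q q > 0))"

definition dual_lattice :: "real^'n^'n \<Rightarrow> (real^'n) set \<Rightarrow> (real^'n) set" where
  "dual_lattice G M = {x\<in>span M. \<forall>m\<in>M. bform G x m \<in> \<int>}"

text \<open>p-primary part of discr M = dual/M, as a set of representatives in the dual.\<close>
definition discr_part :: "real^'n^'n \<Rightarrow> (real^'n) set \<Rightarrow> nat \<Rightarrow> (real^'n) set" where
  "discr_part G M p = {x\<in>dual_lattice G M. \<exists>k::nat. (real p ^ k) *\<^sub>R x \<in> M}"

definition discr_class :: "(real^'n) set \<Rightarrow> real^'n \<Rightarrow> (real^'n) set" where
  "discr_class M x = {y. y - x \<in> M}"

text \<open>discr = discr_2 + discr_3, discr_2 of period 2, discr_3 = Z/3 (cyclic of order 3,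
i.e. exactly three classes).\<close>
definition discr_condition :: "real^'n^'n \<Rightarrow> (real^'n) set \<Rightarrow> bool" where
  "discr_condition G M \<longleftrightarrow>
     (\<forall>x\<in>dual_lattice G M. \<exists>y\<in>discr_part G M 2. \<exists>z\<in>discr_part G M 3. x = y + z) \<and>
     (\<forall>x\<in>discr_part G M 2. 2 *\<^sub>R x \<in> M) \<and>
     card (discr_class M ` discr_part G M 3) = 3"

definition roots :: "real^'n^'n \<Rightarrow> (real^'n) set \<Rightarrow> (real^'n) set" where
  "roots G M = {v\<in>M. bform G v v = 2 \<or>
       (bform G v v = 6 \<and> (\<forall>m\<in>M. bform G v m / 3 \<in> \<int>))}"

definition Upsilon :: "real^'n^'n \<Rightarrow> (real^'n) set \<Rightarrow> (real^'n) set" where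
  "Upsilon G M = {p\<in>span M. bform G p p < 0}"

definition mirrors :: "real^'n^'n \<Rightarrow> (real^'n) set \<Rightarrow> (real^'n) set" where
  "mirrors G M = {p\<in>span M. \<exists>v\<in>roots G M. bform G p v = 0}"

text \<open>A chamber is (the open cone over) P^#: a connected component of Upsilon minus all
mirrors.  The cell P corresponds to the pair {C, -C}.\<close>
definition chamber :: "real^'n^'n \<Rightarrow> (real^'n) set \<Rightarrow> (real^'n) set \<Rightarrow> bool" where
  "chamber G M C \<longleftrightarrow> (\<exists>p \<in> Upsilon G M - mirrors G M.
      C = connected_component_set (Upsilon G M - mirrors G M) p)"

text \<open>Phi^b: the roots defining the walls of P^# (normalised to point inside).\<close>
definition wall_roots :: "real^'n^'n \<Rightarrow> (real^'n) set \<Rightarrow> (real^'n) set \<Rightarrow> (real^'n) set" where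
  "wall_roots G M C = {v\<in>roots G M. (\<forall>p\<in>C. bform G p v > 0) \<and>
      (\<exists>p\<in>Upsilon G M. bform G p v = 0 \<and>
         (\<exists>e>0. \<forall>q\<in>span M. dist q p < e \<and> bform G q v > 0 \<longrightarrow> q \<in> C))}"

definition lattice_aut :: "real^'n^'n \<Rightarrow> (real^'n) set \<Rightarrow> (real^'n \<Rightarrow> real^'n) \<Rightarrow> bool" where
  "lattice_aut G M g \<longleftrightarrow> linear g \<and> g ` M = M \<and>
      (\<forall>x\<in>M. \<forall>y\<in>M. bform G (g x) (g y) = bform G x y)"

text \<open>g acts as -id on discr_3.\<close>
definition Z3_reversing :: "real^'n^'n \<Rightarrow> (real^'n) set \<Rightarrow> (real^'n \<Rightarrow> real^'n) \<Rightarrow> bool" where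
  "Z3_reversing G M g \<longleftrightarrow> (\<forall>x\<in>discr_part G M 3. g x + x \<in> M)"

text \<open>g in Aut(P) (P = {C,-C}) is P-direct iff it preserves C.\<close>
definition P_direct :: "(real^'n) set \<Rightarrow> (real^'n \<Rightarrow> real^'n) \<Rightarrow> bool" where
  "P_direct C g \<longleftrightarrow> g ` C = C"

definition achiral :: "real^'n^'n \<Rightarrow> (real^'n) set \<Rightarrow> bool" where
  "achiral G M \<longleftrightarrow> (\<exists>C g. chamber G M C \<and> lattice_aut G M g \<and> P_direct C g \<and> Z3_reversing G M g)"

definition cox_weight :: "real^'n^'n \<Rightarrow> real^'n \<Rightarrow> real^'n \<Rightarrow> real" where
  "cox_weight G v w = 4 * (bform G v w)^2 / (bform G v v * bform G w w)"

definition elliptic :: "real^'n^'n \<Rightarrow> (real^'n) set \<Rightarrow> bool" where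
  "elliptic G J \<longleftrightarrow> finite J \<and>
     (\<forall>c::real^'n \<Rightarrow> real. (\<exists>v\<in>J. c v \<noteq> 0) \<longrightarrow>
        bform G (\<Sum>v\<in>J. c v *\<^sub>R v) (\<Sum>v\<in>J. c v *\<^sub>R v) > 0)"

definition cox_adj :: "real^'n^'n \<Rightarrow> (real^'n) set \<Rightarrow> real^'n \<Rightarrow> real^'n \<Rightarrow> bool" where
  "cox_adj G J v w \<longleftrightarrow> v \<in> J \<and> w \<in> J \<and> v \<noteq> w \<and> cox_weight G v w \<noteq> 0"

definition components :: "real^'n^'n \<Rightarrow> (real^'n) set \<Rightarrow> (real^'n) set set" where
  "components G J = (\<lambda>v. {w\<in>J. (cox_adj G J)\<^sup>*\<^sup>* v w}) ` J"

text \<open>Standard Dynkin diagrams on vertex set {0..<m}, given by their edge sets.\<close>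
definition edges_A1 :: "nat set set" where "edges_A1 = {}"
definition edges_D :: "nat \<Rightarrow> nat set set" where
  "edges_D m = {{i, i+1} | i. i + 2 < m} \<union> {{m-3, m-1}}"
definition edges_E7 :: "nat set set" where
  "edges_E7 = {{0,1},{1,2},{2,3},{3,4},{4,5},{2,6}}"
definition edges_E8 :: "nat set set" where
  "edges_E8 = {{0,1},{1,2},{2,3},{3,4},{4,5},{5,6},{2,7}}"

definition has_type :: "real^'n^'n \<Rightarrow> (real^'n) set \<Rightarrow> nat \<Rightarrow> nat set set \<Rightarrow> bool" where
  "has_type G K m E \<longleftrightarrow> (\<exists>\<phi>. bij_betw \<phi> {0..<m} K \<and>
     (\<forall>i<m. \<forall>j<m. i \<noteq> j \<longrightarrow> cox_weight G (\<phi> i) (\<phi> j) = (if {i,j} \<in> E then 1 else 0)))"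

definition allowed_type :: "real^'n^'n \<Rightarrow> (real^'n) set \<Rightarrow> bool" where
  "allowed_type G K \<longleftrightarrow> has_type G K 1 edges_A1 \<or>
     (\<exists>n\<ge>2. has_type G K (2*n) (edges_D (2*n))) \<or>
     has_type G K 7 edges_E7 \<or> has_type G K 8 edges_E8"

definition lattice_span :: "(real^'n) set \<Rightarrow> (real^'n) set" where
  "lattice_span J = {y. \<exists>c. (\<forall>v. c v \<in> \<int>) \<and> y = (\<Sum>v\<in>J. c v *\<^sub>R v)}"

definition orth_complement :: "real^'n^'n \<Rightarrow> (real^'n) set \<Rightarrow> (real^'n) set \<Rightarrow> (real^'n) set" where
  "orth_complement G M S = {x\<in>M. \<forall>y\<in>S. bform G x y = 0}"

end

theory Submission
  imports Defs
begin

lemma bf_lin_left: "linear (\<lambda>x. bform G x z)"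
  unfolding bform_def by (simp add: linear_iff inner_add_left)
lemma bf_lin_right: "linear (\<lambda>x. bform G z x)"
  unfolding bform_def by (simp add: linear_iff inner_add_right matrix_vector_right_distrib matrix_vector_mult_scaleR)

lemma bf_add_left: "bform G (x + y) z = bform G x z + bform G y z"
  using linear_add[OF bf_lin_left] by blast
lemma bf_add_right: "bform G z (x + y) = bform G z x + bform G z y"
  using linear_add[OF bf_lin_right] by blast
lemma bf_diff_left: "bform G (x - y) z = bform G x z - bform G y z"
  using linear_diff[OF bf_lin_left] by blast
lemma bf_diff_right: "bform G z (x - y) = bform G z x - bform G z y"
  using linear_diff[OF bf_lin_right] by blast
lemma bf_scale_left: "bform G (a *\<^sub>R x) z = a * bform G x z"
  using linear_scale[OF bf_lin_left] by fastforce
lemma bf_scale_right: "bform G z (a *\<^sub>R x) = a * bform G z x"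
  using linear_scale[OF bf_lin_right] by fastforce
lemma bf_zero_left[simp]: "bform G 0 z = 0" by (simp add: bform_def)
lemma bf_zero_right[simp]: "bform G z 0 = 0" by (simp add: bform_def)
lemma bf_neg_left: "bform G (- x) z = - bform G x z"
  using linear_neg[OF bf_lin_left] by blast
lemma bf_neg_right: "bform G z (- x) = - bform G z x"
  using linear_neg[OF bf_lin_right] by blast
lemma bf_sum_left: "bform G (sum f S) z = (\<Sum>i\<in>S. bform G (f i) z)"
  using linear_sum[OF bf_lin_left] by blast
lemma bf_sum_right: "bform G z (sum f S) = (\<Sum>i\<in>S. bform G z (f i))"
  using linear_sum[OF bf_lin_right] by blast
lemmas bf_simps = bf_add_left bf_add_right bf_diff_left bf_diff_right bf_scale_left bf_scale_right
  bf_neg_left bf_neg_right bf_sum_left bf_sum_right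

lemma bf_sym: assumes "integral_symmetric G" shows "bform G x y = bform G y x"
proof -
  have "transpose G = G" using assms by (simp add: integral_symmetric_def)
  have "bform G x y = (x v* G) \<bullet> y" by (simp add: bform_def dot_lmul_matrix)
  also have "x v* G = G *v x" by (metis \<open>transpose G = G\<close> transpose_matrix_vector)
  finally show ?thesis by (simp add: bform_def inner_commute)
qed

lemma Zn_add: "x \<in> Zn \<Longrightarrow> y \<in> Zn \<Longrightarrow> x + y \<in> Zn" by (simp add: Zn_def)
lemma Zn_diff: "x \<in> Zn \<Longrightarrow> y \<in> Zn \<Longrightarrow> x - y \<in> Zn" by (simp add: Zn_def)
lemma Zn_neg: "x \<in> Zn \<Longrightarrow> - x \<in> Zn" by (simp add: Zn_def)
lemma Zn_zero: "0 \<in> Zn" by (simp add: Zn_def)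
lemma Zn_scale: "a \<in> \<int> \<Longrightarrow> x \<in> Zn \<Longrightarrow> a *\<^sub>R x \<in> Zn" by (simp add: Zn_def)
lemma Zn_sum: "(\<And>i. i \<in> S \<Longrightarrow> f i \<in> Zn) \<Longrightarrow> sum f S \<in> Zn"
  by (induction S rule: infinite_finite_induct) (auto simp: Zn_zero Zn_add)

lemma bf_int: assumes "integral_symmetric G" "x \<in> Zn" "y \<in> Zn" shows "bform G x y \<in> \<int>"
proof -
  have G: "\<And>i j. G $ i $ j \<in> \<int>" using assms(1) by (simp add: integral_symmetric_def)
  have "bform G x y = (\<Sum>i\<in>UNIV. x $ i * (\<Sum>j\<in>UNIV. G $ i $ j * y $ j))"
    by (simp add: bform_def inner_vec_def matrix_vector_mult_def)
  also have "\<dots> \<in> \<int>" using G assms(2,3) unfolding Zn_def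
    by (intro Ints_sum Ints_mult) auto
  finally show ?thesis .
qed

lemma Basis_Zn: "(Basis :: (real^'n) set) \<subseteq> Zn"
  by (auto simp: Basis_vec_def Zn_def axis_def)
lemma span_Zn: "span (Zn :: (real^'n) set) = UNIV"
  by (metis Basis_Zn span_Basis span_mono top.extremum_uniqueI)

definition A0 :: "nat set set \<Rightarrow> nat \<Rightarrow> nat \<Rightarrow> int" where
  "A0 E j k = (if j = k then 2 else if {j,k} \<in> E then -1 else 0)"

definition goodT :: "nat \<Rightarrow> nat set set \<Rightarrow> bool" where
  "goodT m E \<longleftrightarrow> (\<forall>i<m. \<exists>c::nat\<Rightarrow>int. \<forall>k<m. (\<Sum>j<m. c j * A0 E j k) = (if k = i then 2 else 0))"

definition nbr :: "nat \<Rightarrow> nat set set \<Rightarrow> nat \<Rightarrow> nat set" where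
  "nbr m E k = {j. j < m \<and> j \<noteq> k \<and> {j,k} \<in> E}"

lemma A0_sum: "(\<Sum>j<m. c j * A0 E j k) = (if k < m then 2 * c k else 0) - (\<Sum>j\<in>nbr m E k. c j)"
proof -
  have "(\<Sum>j<m. c j * A0 E j k) = (\<Sum>j<m. (if j = k then 2 * c j else 0)) - (\<Sum>j<m. (if j \<noteq> k \<and> {j,k} \<in> E then c j else 0))"
    unfolding sum_subtractf[symmetric] by (rule sum.cong) (auto simp: A0_def)
  also have "(\<Sum>j<m. (if j = k then 2 * c j else 0)) = (if k < m then 2 * c k else 0)"
    by (simp add: sum.delta')
  also have "(\<Sum>j<m. (if j \<noteq> k \<and> {j,k} \<in> E then c j else 0)) = (\<Sum>j\<in>nbr m E k. c j)"
    unfolding nbr_def by (simp add: sum.inter_filter[symmetric])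
  finally show ?thesis .
qed

lemma D_edge: assumes "4 \<le> m" "j \<noteq> k"
  shows "{j,k} \<in> edges_D m \<longleftrightarrow> (k = j+1 \<and> j+2<m) \<or> (j = k+1 \<and> k+2<m) \<or> (j = m-3 \<and> k = m-1) \<or> (j = m-1 \<and> k = m-3)"
  using assms unfolding edges_D_def by (auto simp: doubleton_eq_iff)

lemma D_nbr:
  assumes "4 \<le> m"
  shows "nbr m (edges_D m) 0 = {1}"
    and "1 \<le> k \<Longrightarrow> k+4 \<le> m \<Longrightarrow> nbr m (edges_D m) k = {k-1, k+1}"
    and "nbr m (edges_D m) (m-3) = {m-4, m-2, m-1}"
    and "nbr m (edges_D m) (m-2) = {m-3}"
    and "nbr m (edges_D m) (m-1) = {m-3}"
  using assms by (auto simp: nbr_def D_edge)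



lemma sum2: "a \<noteq> b \<Longrightarrow> (\<Sum>j\<in>{a,b}. f j) = f a + (f b::int)" by simp
lemma sum3: "a \<noteq> b \<Longrightarrow> a \<noteq> c \<Longrightarrow> b \<noteq> c \<Longrightarrow> (\<Sum>j\<in>{a,b,c}. f j) = f a + f b + (f c::int)" by simp

lemma good_D_path:
  assumes m4: "4 \<le> m" and i: "i \<le> m - 3" and km: "k < m"
  defines "c \<equiv> (\<lambda>j. if j \<le> m-3 then 2*(int (min i j)+1) else int i + 1)"
  shows "(\<Sum>j<m. c j * A0 (edges_D m) j k) = (if k = i then 2 else 0)"
proof -
  have "k = 0 \<or> (1 \<le> k \<and> k+4 \<le> m) \<or> k = m-3 \<or> k = m-2 \<or> k = m-1" using km m4 by linarith
  then show ?thesis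
  proof (elim disjE)
    assume k: "k = 0"
    have "c 0 = 2" "c 1 = 2 * (int (min i 1) + 1)" using m4 by (auto simp: c_def)
    then show ?thesis unfolding A0_sum using D_nbr(1)[OF m4] k km by (cases "i = 0") auto
  next
    assume k1: "1 \<le> k \<and> k+4 \<le> m"
    have N: "nbr m (edges_D m) k = {k-1, k+1}" using D_nbr(2)[OF m4, of k] k1 by simp
    have ne: "k - 1 \<noteq> k + 1" by simp
    have "c k = 2*(int (min i k)+1)" "c (k-1) = 2*(int (min i (k-1))+1)" "c (k+1) = 2*(int (min i (k+1))+1)"
      using k1 by (auto simp: c_def)
    moreover have "2 * (2*(int (min i k)+1)) - (2*(int (min i (k-1))+1) + 2*(int (min i (k+1))+1)) = (if k = i then 2 else 0)"
      using k1 by (cases "i < k"; cases "i = k") (auto simp: min_def)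
    ultimately show ?thesis unfolding A0_sum using N ne km by (simp add: sum2)
  next
    assume k: "k = m-3"
    have N: "nbr m (edges_D m) k = {m-4, m-2, m-1}" using D_nbr(3)[OF m4] k by simp
    have "c k = 2*(int i+1)" "c (m-4) = 2*(int (min i (m-4))+1)" "c (m-2) = int i + 1" "c (m-1) = int i + 1"
      using k m4 i by (auto simp: c_def min_def)
    moreover have "2 * (2*(int i+1)) - (2*(int (min i (m-4))+1) + (int i + 1) + (int i + 1)) = (if k = i then 2 else 0)"
      using k m4 i by (cases "i = m-3") (auto simp: min_def)
    ultimately show ?thesis unfolding A0_sum using N km m4 by (simp add: sum3)
  next
    assume k: "k = m-2"
    have N: "nbr m (edges_D m) k = {m-3}" using D_nbr(4)[OF m4] k by simp
    have "c k = int i + 1" "c (m-3) = 2*(int i+1)" using k m4 i by (auto simp: c_def min_def)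
    then show ?thesis unfolding A0_sum using N km m4 k i by simp
  next
    assume k: "k = m-1"
    have N: "nbr m (edges_D m) k = {m-3}" using D_nbr(5)[OF m4] k by simp
    have "c k = int i + 1" "c (m-3) = 2*(int i+1)" using k m4 i by (auto simp: c_def min_def)
    then show ?thesis unfolding A0_sum using N km m4 k i by simp
  qed
qed


lemma good_D_spin:
  assumes m4: "4 \<le> m" and mn: "m = 2*n" and isp: "i = m-2 \<or> i = m-1" and km: "k < m"
  defines "c \<equiv> (\<lambda>j. if j \<le> m-3 then int j + 1 else if j = i then int n else int n - 1)"
  shows "(\<Sum>j<m. c j * A0 (edges_D m) j k) = (if k = i then 2 else 0)"
proof -
  have S: "(\<Sum>j<m. c j * A0 (edges_D m) j k) = 2 * c k - (\<Sum>j\<in>nbr m (edges_D m) k. c j)"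
    using km by (simp add: A0_sum)
  have "k = 0 \<or> (1 \<le> k \<and> k+4 \<le> m) \<or> k = m-3 \<or> k = m-2 \<or> k = m-1" using km m4 by linarith
  then show ?thesis
  proof (elim disjE)
    assume k: "k = 0"
    have "c 0 = 1" "c 1 = 2" using m4 by (auto simp: c_def)
    moreover have "k \<noteq> i" using k isp m4 by linarith
    moreover have "nbr m (edges_D m) k = {1}" using D_nbr(1)[OF m4] k by simp
    ultimately show ?thesis unfolding S using k by simp
  next
    assume k1: "1 \<le> k \<and> k+4 \<le> m"
    have N: "nbr m (edges_D m) k = {k-1, k+1}" using D_nbr(2)[OF m4, of k] k1 by simp
    have ne: "k - 1 \<noteq> k + 1" by simp
    have "c k = int k + 1" "c (k-1) = int k" "c (k+1) = int k + 2"
      using k1 by (auto simp: c_def)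
    moreover have "k \<noteq> i" using k1 isp m4 by linarith
    ultimately show ?thesis unfolding S N sum2[OF ne] by simp
  next
    assume k: "k = m-3"
    have N: "nbr m (edges_D m) k = {m-4, m-2, m-1}" using D_nbr(3)[OF m4] k by simp
    have ne: "m-4 \<noteq> m-2" "m-4 \<noteq> m-1" "m-2 \<noteq> m-1" using m4 by auto
    have "c k = int m - 2" "c (m-4) = int m - 3" "c (m-2) + c (m-1) = 2 * int n - 1"
      using k m4 isp by (auto simp: c_def)
    moreover have "k \<noteq> i" using k isp m4 by linarith
    ultimately show ?thesis unfolding S N sum3[OF ne] using mn by simp
  next
    assume k: "k = m-2"
    have N: "nbr m (edges_D m) k = {m-3}" using D_nbr(4)[OF m4] k by simp
    have "c k = (if k = i then int n else int n - 1)" "c (m-3) = int m - 2" using k m4 isp by (auto simp: c_def)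
    then show ?thesis unfolding S N using mn by simp
  next
    assume k: "k = m-1"
    have N: "nbr m (edges_D m) k = {m-3}" using D_nbr(5)[OF m4] k by simp
    have "c k = (if k = i then int n else int n - 1)" "c (m-3) = int m - 2" using k m4 isp by (auto simp: c_def)
    then show ?thesis unfolding S N using mn by simp
  qed
qed

lemma good_D: assumes "2 \<le> n" shows "goodT (2*n) (edges_D (2*n))"
  unfolding goodT_def
proof (intro allI impI)
  fix i assume i: "i < 2*n"
  have m4: "4 \<le> 2*n" using assms by simp
  show "\<exists>c::nat\<Rightarrow>int. \<forall>k<2*n. (\<Sum>j<2*n. c j * A0 (edges_D (2*n)) j k) = (if k = i then 2 else 0)"
  proof (cases "i \<le> 2*n - 3")
    case True
    show ?thesis by (rule exI[where x="\<lambda>j. if j \<le> 2*n-3 then 2*(int (min i j)+1) else int i + 1"]) (use good_D_path[OF m4 True] in auto)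
  next
    case False
    then have "i = 2*n-2 \<or> i = 2*n-1" using i by linarith
    show ?thesis by (rule exI[where x="\<lambda>j. if j \<le> 2*n-3 then int j + 1 else if j = i then int n else int n - 1"]) (use good_D_spin[OF m4 refl \<open>i = 2*n-2 \<or> i = 2*n-1\<close>] in auto)
  qed
qed

definition treeT :: "nat \<Rightarrow> nat set set \<Rightarrow> bool" where
  "treeT m E \<longleftrightarrow> (\<forall>k<m. 0 < k \<longrightarrow> (\<exists>p<k. {p,k} \<in> E \<and> (\<forall>q<k. {q,k} \<in> E \<longrightarrow> q = p)))"

lemma treeT_intro:
  assumes "\<And>k. k < m \<Longrightarrow> 0 < k \<Longrightarrow> par k < k \<and> {par k, k} \<in> E \<and> (\<forall>q<k. {q,k} \<in> E \<longrightarrow> q = par k)"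
  shows "treeT m E"
  unfolding treeT_def using assms by blast

lemma tree_D: assumes m4: "4 \<le> m" shows "treeT m (edges_D m)"
proof (rule treeT_intro[where par = "\<lambda>k. if k = m-1 then m-3 else k-1"])
  fix k assume k: "k < m" "0 < k"
  show "(if k = m-1 then m-3 else k-1) < k \<and> {if k = m-1 then m-3 else k-1, k} \<in> edges_D m \<and>
      (\<forall>q<k. {q,k} \<in> edges_D m \<longrightarrow> q = (if k = m-1 then m-3 else k-1))"
  proof (cases "k = m-1")
    case True
    have 1: "{m-3, k} \<in> edges_D m" using True unfolding edges_D_def by blast
    have 2: "q = m-3" if "q < k" "{q,k} \<in> edges_D m" for q
    proof -
      have "q \<noteq> k" using that by simp
      from D_edge[OF m4 this] that(2) have "(k = q+1 \<and> q+2<m) \<or> (q = k+1 \<and> k+2<m) \<or> (q = m-3 \<and> k = m-1) \<or> (q = m-1 \<and> k = m-3)" by blast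
      then show ?thesis using True that(1) m4 by linarith
    qed
    show ?thesis using True 1 2 m4 by simp
  next
    case False
    have 1: "{k-1, k} \<in> edges_D m" unfolding edges_D_def using False k
      by (intro UnI1 CollectI exI[of _ "k-1"]) auto
    have 2: "q = k-1" if "q < k" "{q,k} \<in> edges_D m" for q
    proof -
      have "q \<noteq> k" using that by simp
      from D_edge[OF m4 this] that(2) have "(k = q+1 \<and> q+2<m) \<or> (q = k+1 \<and> k+2<m) \<or> (q = m-3 \<and> k = m-1) \<or> (q = m-1 \<and> k = m-3)" by blast
      then show ?thesis using False that(1) m4 by linarith
    qed
    show ?thesis using False 1 2 k by simp
  qed
qed

lemma tree_A1: "treeT 1 edges_A1" unfolding treeT_def by simp
lemma good_A1: "goodT 1 edges_A1"
  unfolding goodT_def by (intro allI impI exI[of _ "\<lambda>_. 1"]) (simp add: A0_def)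


lemma sum7: "(\<Sum>j<(7::nat). f j) = f 0 + f 1 + f 2 + f 3 + f 4 + f 5 + f 6"
  by (simp add: eval_nat_numeral lessThan_Suc ac_simps)
lemma sum8: "(\<Sum>j<(8::nat). f j) = f 0 + f 1 + f 2 + f 3 + f 4 + f 5 + f 6 + f 7"
  by (simp add: eval_nat_numeral lessThan_Suc ac_simps)
lemma all7: "(\<forall>i<(7::nat). P i) = (P 0 \<and> P 1 \<and> P 2 \<and> P 3 \<and> P 4 \<and> P 5 \<and> P 6)"
proof -
  have "{..<(7::nat)} = {0,1,2,3,4,5,6}" by auto
  then have "(\<forall>i<(7::nat). P i) = (\<forall>i\<in>{0,1,2,3,4,5,6}. P i)" by (metis lessThan_iff)
  then show ?thesis by simp
qed
lemma all8: "(\<forall>i<(8::nat). P i) = (P 0 \<and> P 1 \<and> P 2 \<and> P 3 \<and> P 4 \<and> P 5 \<and> P 6 \<and> P 7)"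
proof -
  have "{..<(8::nat)} = {0,1,2,3,4,5,6,7}" by auto
  then have "(\<forall>i<(8::nat). P i) = (\<forall>i\<in>{0,1,2,3,4,5,6,7}. P i)" by (metis lessThan_iff)
  then show ?thesis by simp
qed

lemma mem7: "{j,k} \<in> edges_E7 \<longleftrightarrow> (j,k) \<in> {(0,1),(1,0),(1,2),(2,1),(2,3),(3,2),(3,4),(4,3),(4,5),(5,4),(2,6),(6,2)}"
  by (auto simp: edges_E7_def doubleton_eq_iff)
lemma mem8: "{j,k} \<in> edges_E8 \<longleftrightarrow> (j,k) \<in> {(0,1),(1,0),(1,2),(2,1),(2,3),(3,2),(3,4),(4,3),(4,5),(5,4),(5,6),(6,5),(2,7),(7,2)}"
  by (auto simp: edges_E8_def doubleton_eq_iff)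

definition W7 :: "int list list" where "W7 = [[4, 6, 8, 6, 4, 2, 4], [6, 12, 16, 12, 8, 4, 8], [8, 16, 24, 18, 12, 6, 12], [6, 12, 18, 15, 10, 5, 9], [4, 8, 12, 10, 8, 4, 6], [2, 4, 6, 5, 4, 3, 3], [4, 8, 12, 9, 6, 3, 7]]"
definition W8 :: "int list list" where "W8 = [[8, 14, 20, 16, 12, 8, 4, 10], [14, 28, 40, 32, 24, 16, 8, 20], [20, 40, 60, 48, 36, 24, 12, 30], [16, 32, 48, 40, 30, 20, 10, 24], [12, 24, 36, 30, 24, 16, 8, 18], [8, 16, 24, 20, 16, 12, 6, 12], [4, 8, 12, 10, 8, 6, 4, 6], [10, 20, 30, 24, 18, 12, 6, 16]]"

lemma E7_check: "\<forall>i<7. \<forall>k<7. (\<Sum>j<7. W7!i!j * A0 edges_E7 j k) = (if k = i then 2 else 0)"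
  unfolding all7 sum7 by (simp add: A0_def mem7 W7_def)
lemma E8_check: "\<forall>i<8. \<forall>k<8. (\<Sum>j<8. W8!i!j * A0 edges_E8 j k) = (if k = i then 2 else 0)"
  unfolding all8 sum8 by (simp add: A0_def mem8 W8_def)

lemma good_E7: "goodT 7 edges_E7"
  unfolding goodT_def using E7_check by blast
lemma good_E8: "goodT 8 edges_E8"
  unfolding goodT_def using E8_check by blast

lemma treeT_intro2:
  "(\<forall>k<m. 0 < k \<longrightarrow> par k < k \<and> {par k, k} \<in> E \<and> (\<forall>q<k. {q,k} \<in> E \<longrightarrow> q = par k)) \<Longrightarrow> treeT m E"
  unfolding treeT_def by blast
lemma tree_E7: "treeT 7 edges_E7"
  by (rule treeT_intro2[where par="\<lambda>k. if k = 6 then 2 else k - 1"], simp only: all7, simp add: mem7)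
lemma tree_E8: "treeT 8 edges_E8"
  by (rule treeT_intro2[where par="\<lambda>k. if k = 7 then 2 else k - 1"], simp only: all8, simp add: mem8)

lemma LS_zero: "0 \<in> lattice_span K"
  unfolding lattice_span_def by (rule CollectI, rule exI[of _ "\<lambda>_. 0"]) simp

lemma LS_base: assumes "finite K" "v \<in> K" shows "v \<in> lattice_span K"
  unfolding lattice_span_def
proof (rule CollectI, rule exI[of _ "\<lambda>w. if w = v then 1 else 0"], intro conjI allI)
  have "(\<Sum>w\<in>K. (if w = v then 1 else 0) *\<^sub>R w) = (\<Sum>w\<in>K. if w = v then w else 0)"
    by (rule sum.cong) auto
  then show "v = (\<Sum>w\<in>K. (if w = v then 1 else 0) *\<^sub>R w)"
    using assms by (simp add: sum.delta')
qed auto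

lemma LS_add: assumes "y1 \<in> lattice_span K" "y2 \<in> lattice_span K" shows "y1 + y2 \<in> lattice_span K"
proof -
  obtain c1 where c1: "\<forall>v. c1 v \<in> \<int>" "y1 = (\<Sum>v\<in>K. c1 v *\<^sub>R v)" using assms(1) unfolding lattice_span_def by blast
  obtain c2 where c2: "\<forall>v. c2 v \<in> \<int>" "y2 = (\<Sum>v\<in>K. c2 v *\<^sub>R v)" using assms(2) unfolding lattice_span_def by blast
  have "y1 + y2 = (\<Sum>v\<in>K. (c1 v + c2 v) *\<^sub>R v)" using c1 c2 by (simp add: scaleR_add_left sum.distrib)
  moreover have "\<forall>v. c1 v + c2 v \<in> \<int>" using c1 c2 by simp
  ultimately show ?thesis unfolding lattice_span_def
    by (intro CollectI exI[of _ "\<lambda>v. c1 v + c2 v"] conjI) auto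
qed

lemma LS_scale: assumes "a \<in> \<int>" "y \<in> lattice_span K" shows "a *\<^sub>R y \<in> lattice_span K"
proof -
  obtain c where c: "\<forall>v. c v \<in> \<int>" "y = (\<Sum>v\<in>K. c v *\<^sub>R v)" using assms(2) unfolding lattice_span_def by blast
  have "a *\<^sub>R y = (\<Sum>v\<in>K. (a * c v) *\<^sub>R v)" using c by (simp add: scaleR_sum_right)
  moreover have "\<forall>v. a * c v \<in> \<int>" using c assms(1) by simp
  ultimately show ?thesis unfolding lattice_span_def
    by (intro CollectI exI[of _ "\<lambda>v. a * c v"] conjI) auto
qed

lemma LS_sum: "(\<And>i. i \<in> I \<Longrightarrow> f i \<in> lattice_span K) \<Longrightarrow> sum f I \<in> lattice_span K"
  by (induction I rule: infinite_finite_induct) (auto simp: LS_zero LS_add)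

lemma LS_span: "lattice_span K \<subseteq> span K"
proof
  fix y assume "y \<in> lattice_span K"
  then obtain c where "y = (\<Sum>v\<in>K. c v *\<^sub>R v)" unfolding lattice_span_def by blast
  moreover have "(\<Sum>v\<in>K. c v *\<^sub>R v) \<in> span K"
    by (rule span_sum) (rule span_scale, rule span_base)
  ultimately show "y \<in> span K" by simp
qed

lemma int_sq_ne3: assumes "b \<in> \<int>" shows "b * b \<noteq> (3::real)"
proof
  assume h: "b * b = 3"
  obtain z where z: "b = of_int z" using assms Ints_cases by blast
  have "z * z = 3" using h z by (metis of_int_eq_iff of_int_mult of_int_numeral)
  moreover have "z * z \<le> 1 \<or> z * z \<ge> 4"
  proof (cases "\<bar>z\<bar> \<le> 1")
    case True
    then have "\<bar>z\<bar> * \<bar>z\<bar> \<le> 1 * 1" by (intro mult_mono) auto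
    then show ?thesis by (simp add: abs_mult_self_eq)
  next
    case False
    then have "2 * 2 \<le> \<bar>z\<bar> * \<bar>z\<bar>" by (intro mult_mono) auto
    then show ?thesis by (simp add: abs_mult_self_eq)
  qed
  ultimately show False by simp
qed

lemma treeD: "treeT m E \<Longrightarrow> k < m \<Longrightarrow> 0 < k \<Longrightarrow> \<exists>p<k. {p,k} \<in> E \<and> (\<forall>q<k. {q,k} \<in> E \<longrightarrow> q = p)"
  unfolding treeT_def by blast

lemma comp_lemma:
  fixes G :: "real^'n^'n" and K :: "(real^'n) set"
  assumes GI: "integral_symmetric G" and KR: "K \<subseteq> roots G Zn"
    and ht: "has_type G K m E" and gd: "goodT m E" and tr: "treeT m E" and m0: "0 < m"
    and x: "x \<in> Zn"
  shows "\<exists>y\<in>lattice_span K. \<forall>w\<in>K. bform G y w = 2 * bform G x w"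
proof -
  obtain \<phi> where bij: "bij_betw \<phi> {0..<m} K"
    and W: "\<forall>i<m. \<forall>j<m. i \<noteq> j \<longrightarrow> cox_weight G (\<phi> i) (\<phi> j) = (if {i,j} \<in> E then 1 else 0)"
    using ht unfolding has_type_def by blast
  have vK: "\<phi> i \<in> K" if "i < m" for i using bij that bij_betwE by fastforce
  have fK: "finite K" using bij bij_betw_finite by blast
  have vR: "\<phi> i \<in> roots G Zn" if "i < m" for i using vK KR that by blast
  have vZ: "\<phi> i \<in> Zn" if "i < m" for i using vR[OF that] unfolding roots_def by blast
  define N where "N i = bform G (\<phi> i) (\<phi> i)" for i
  have N26: "N i = 2 \<or> (N i = 6 \<and> (\<forall>z\<in>Zn. bform G (\<phi> i) z / 3 \<in> \<int>))" if "i < m" for i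
    using vR[OF that] unfolding roots_def N_def by blast
  define b where "b i j = bform G (\<phi> i) (\<phi> j)" for i j
  have bint: "b i j \<in> \<int>" if "i < m" "j < m" for i j
    unfolding b_def using bf_int[OF GI vZ[OF that(1)] vZ[OF that(2)]] .
  have bsym: "b i j = b j i" for i j unfolding b_def using bf_sym[OF GI] by blast
  have N26': "N i = 2 \<or> N i = 6" if "i < m" for i using N26[OF that] by blast
  have Npos: "N i > 0" if "i < m" for i using N26'[OF that] by auto
  have cw: "4 * (b i j)^2 = (if {i,j} \<in> E then N i * N j else 0)" if "i < m" "j < m" "i \<noteq> j" for i j
  proof -
    have "cox_weight G (\<phi> i) (\<phi> j) = 4 * (b i j)^2 / (N i * N j)"
      unfolding cox_weight_def b_def N_def ..
    moreover have "N i * N j > 0" using Npos that by simp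
    moreover have "cox_weight G (\<phi> i) (\<phi> j) = (if {i,j} \<in> E then 1 else 0)" using W that by blast
    ultimately show ?thesis
      by (cases "{i,j} \<in> E") (auto simp: divide_eq_eq split: if_splits)
  qed
  have Neq: "i < m \<longrightarrow> N i = N 0" for i
  proof (induction i rule: less_induct)
    case (less i)
    show ?case
    proof (cases "i = 0")
      case False
      show ?thesis
      proof
        assume im: "i < m"
        have i0: "0 < i" using False by simp
        obtain p where p: "p < i" "{p,i} \<in> E" using treeD[OF tr im i0] by blast
        have pm: "p < m" using p im by simp
        have pne: "p \<noteq> i" using p by simp
        have Np: "N p = N 0" using less[OF p(1)] pm by blast
        have c: "4 * (b p i)^2 = N p * N i" using cw[OF pm im pne] p(2) by simp
        show "N i = N 0"
        proof (rule ccontr)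
          assume "N i \<noteq> N 0"
          moreover have "N p = 2 \<or> N p = 6" using N26'[of p] p im by simp
          moreover have "N i = 2 \<or> N i = 6" using N26'[of i] im by simp
          ultimately have "N p * N i = 12" using Np by auto
          then have "b p i * b p i = 3" using c by (simp add: power2_eq_square)
          then show False using int_sq_ne3[OF bint[of p i]] p im by simp
        qed
      qed
    qed simp
  qed
  define t where "t = N 0 / 2"
  have Nt: "N i = 2 * t" if "i < m" for i using Neq[rule_format, OF that] t_def by simp
  have t13: "t = 1 \<or> t = 3" using N26[OF m0] t_def by auto
  have tpos: "t > 0" using t13 by auto
  have bsq: "(b i j)^2 = (if {i,j} \<in> E then t^2 else 0)" if "i < m" "j < m" "i \<noteq> j" for i j
    using cw[OF that] Nt[OF that(1)] Nt[OF that(2)] by (cases "{i,j} \<in> E") (simp_all add: power2_eq_square)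
  have signs: "\<exists>s::nat\<Rightarrow>real. (\<forall>i. s i = 1 \<or> s i = -1) \<and>
      (\<forall>i<k. \<forall>j<k. i \<noteq> j \<longrightarrow> {i,j} \<in> E \<longrightarrow> s i * s j * b i j = - t)" if "k \<le> m" for k
    using that
  proof (induction k)
    case 0
    then show ?case by (intro exI[of _ "\<lambda>_. 1"]) auto
  next
    case (Suc k)
    then obtain s where s1: "\<forall>i. s i = 1 \<or> s i = -1"
      and s2: "\<forall>i<k. \<forall>j<k. i \<noteq> j \<longrightarrow> {i,j} \<in> E \<longrightarrow> s i * s j * b i j = - t" by auto
    have km: "k < m" using Suc by simp
    show ?case
    proof (cases "k = 0")
      case True
      then show ?thesis using s1 by (intro exI[of _ s]) auto
    next
      case False
      have k0: "0 < k" using False by simp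
      obtain p where p: "p < k" "{p,k} \<in> E" and pu: "\<forall>q<k. {q,k} \<in> E \<longrightarrow> q = p"
        using treeD[OF tr km k0] by blast
      have "(b p k)^2 = t^2" using bsq[of p k] p km by simp
      then have bpk: "b p k = t \<or> b p k = - t" using power2_eq_iff by blast
      define s' where "s' = s(k := - (b p k / t) * s p)"
      have s'1: "\<forall>i. s' i = 1 \<or> s' i = -1" using s1 bpk tpos unfolding s'_def by auto
      have key: "s' p * s' k * b p k = - t"
      proof -
        have "s' p * s' k * b p k = - (s p * s p) * ((b p k)^2 / t)"
          using p unfolding s'_def by (simp add: power2_eq_square)
        also have "s p * s p = 1" using s1 by (metis mult_minus_left mult_1 minus_minus)
        finally show ?thesis using \<open>(b p k)^2 = t^2\<close> tpos by (simp add: power2_eq_square)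
      qed
      have "\<forall>i<Suc k. \<forall>j<Suc k. i \<noteq> j \<longrightarrow> {i,j} \<in> E \<longrightarrow> s' i * s' j * b i j = - t"
      proof (intro allI impI)
        fix i j assume ij: "i < Suc k" "j < Suc k" "i \<noteq> j" "{i,j} \<in> E"
        show "s' i * s' j * b i j = - t"
        proof (cases "i = k")
          case True
          then have "j < k" using ij by simp
          moreover have "{j,k} \<in> E" using ij True by (simp add: insert_commute)
          ultimately have "j = p" using pu by blast
          then show ?thesis using key True bsym[of p k] by (simp add: mult.commute)
        next
          case False
          show ?thesis
          proof (cases "j = k")
            case True
            then have "i = p" using pu ij False by auto
            then show ?thesis using key True by simp
          next
            case False
            then show ?thesis using \<open>i \<noteq> k\<close> ij s2 unfolding s'_def by auto
          qed
        qed
      qed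
      then show ?thesis using s'1 by blast
    qed
  qed
  obtain s :: "nat \<Rightarrow> real" where s1: "\<forall>i. s i = 1 \<or> s i = -1"
    and s2: "\<forall>i<m. \<forall>j<m. i \<noteq> j \<longrightarrow> {i,j} \<in> E \<longrightarrow> s i * s j * b i j = - t"
    using signs[of m] by auto
  have ss: "s i * s i = 1" for i using s1 by (metis mult_minus_left mult_1 minus_minus)
  define u where "u i = s i *\<^sub>R \<phi> i" for i
  have uu: "bform G (u i) (u j) = t * of_int (A0 E i j)" if "i < m" "j < m" for i j
  proof -
    have e: "bform G (u i) (u j) = s i * s j * b i j" unfolding u_def b_def by (simp add: bf_simps)
    show ?thesis
    proof (cases "i = j")
      case True
      then show ?thesis using e ss[of i] Nt[OF that(1)] unfolding A0_def N_def b_def by simp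
    next
      case False
      show ?thesis
      proof (cases "{i,j} \<in> E")
        case True
        then show ?thesis using e s2 that False unfolding A0_def by simp
      next
        case nE: False
        then have "b i j = 0" using bsq[OF that False] by simp
        then show ?thesis using e nE False unfolding A0_def by simp
      qed
    qed
  qed
  have phiu: "\<phi> i = s i *\<^sub>R u i" for i unfolding u_def using ss[of i] by simp
  define \<beta> where "\<beta> k = bform G x (u k) / t" for k
  have \<beta>int: "\<beta> k \<in> \<int>" if "k < m" for k
  proof -
    have "\<beta> k = s k * (bform G x (\<phi> k) / t)" unfolding \<beta>_def u_def by (simp add: bf_simps)
    moreover have "bform G x (\<phi> k) / t \<in> \<int>"
    proof (cases "t = 1")
      case True
      then show ?thesis using bf_int[OF GI x vZ[OF that]] by simp
    next
      case False
      then have "t = 3" using t13 by simp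
      then have "N k = 6" using Nt[OF that] by simp
      then have "bform G (\<phi> k) x / 3 \<in> \<int>" using N26[OF that] x by auto
      then show ?thesis using \<open>t = 3\<close> bf_sym[OF GI] by metis
    qed
    moreover have "s k \<in> \<int>" using s1 by (metis Ints_1 Ints_minus)
    ultimately show ?thesis by (metis Ints_mult times_divide_eq_right)
  qed
  obtain C :: "nat \<Rightarrow> nat \<Rightarrow> int" where C: "\<forall>i<m. \<forall>k<m. (\<Sum>j<m. C i j * A0 E j k) = (if k = i then 2 else 0)"
  proof -
    have "\<forall>i. \<exists>c::nat\<Rightarrow>int. i < m \<longrightarrow> (\<forall>k<m. (\<Sum>j<m. c j * A0 E j k) = (if k = i then 2 else 0))"
      using gd unfolding goodT_def by blast
    then obtain C where "\<forall>i. i < m \<longrightarrow> (\<forall>k<m. (\<Sum>j<m. C i j * A0 E j k) = (if k = i then 2 else 0))"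
      by metis
    then show ?thesis using that by blast
  qed
  define Y where "Y i = (\<Sum>j<m. of_int (C i j) *\<^sub>R u j)" for i
  have YU: "bform G (Y i) (u k) = t * (if k = i then 2 else 0)" if "i < m" "k < m" for i k
  proof -
    have "bform G (Y i) (u k) = (\<Sum>j<m. of_int (C i j) * bform G (u j) (u k))"
      unfolding Y_def by (simp add: bf_simps)
    also have "\<dots> = (\<Sum>j<m. t * of_int (C i j * A0 E j k))"
      using uu that by (intro sum.cong) auto
    also have "\<dots> = t * of_int (\<Sum>j<m. C i j * A0 E j k)"
      by (simp add: sum_distrib_left)
    also have "\<dots> = t * (if k = i then 2 else 0)" using C that by simp
    finally show ?thesis .
  qed
  define y where "y = (\<Sum>i<m. \<beta> i *\<^sub>R Y i)"
  have yu: "bform G y (u k) = 2 * bform G x (u k)" if "k < m" for k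
  proof -
    have "bform G y (u k) = (\<Sum>i<m. \<beta> i * bform G (Y i) (u k))"
      unfolding y_def by (simp add: bf_simps)
    also have "\<dots> = (\<Sum>i<m. if i = k then \<beta> i * (2 * t) else 0)"
      using YU that by (intro sum.cong) auto
    also have "\<dots> = \<beta> k * (2 * t)" using that by (simp add: sum.delta')
    also have "\<dots> = 2 * bform G x (u k)" unfolding \<beta>_def using tpos by simp
    finally show ?thesis .
  qed
  show ?thesis
  proof (intro bexI ballI)
    fix w assume "w \<in> K"
    then obtain k where k: "k < m" "w = \<phi> k" using bij unfolding bij_betw_def by auto
    have "bform G y w = s k * bform G y (u k)" using k phiu[of k] by (simp add: bf_simps)
    also have "\<dots> = 2 * bform G x (s k *\<^sub>R u k)" using yu[OF k(1)] by (simp add: bf_simps)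
    finally show "bform G y w = 2 * bform G x w" using k phiu[of k] by simp
  next
    have "Y i \<in> lattice_span K" if "i < m" for i
      unfolding Y_def
    proof (rule LS_sum)
      fix j assume "j \<in> {..<m}"
      then have "of_int (C i j) *\<^sub>R u j = (of_int (C i j) * s j) *\<^sub>R \<phi> j" unfolding u_def by simp
      moreover have "of_int (C i j) * s j \<in> \<int>" using s1 by (metis Ints_1 Ints_minus Ints_mult Ints_of_int)
      ultimately show "of_int (C i j) *\<^sub>R u j \<in> lattice_span K"
        using LS_scale[OF _ LS_base[OF fK vK[of j]]] \<open>j \<in> {..<m}\<close> by simp
    qed
    then show "y \<in> lattice_span K" unfolding y_def
      by (intro LS_sum LS_scale \<beta>int) auto
  qed
qed

lemma elliptic_psd:
  assumes ell: "elliptic G J" and z: "z \<in> span J"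
  shows "bform G z z \<ge> 0" and "bform G z z = 0 \<Longrightarrow> z = 0"
proof -
  have fin: "finite J" using ell unfolding elliptic_def by blast
  obtain c where zc: "z = (\<Sum>v\<in>J. c v *\<^sub>R v)" using z span_finite[OF fin] by auto
  have pos: "bform G z z > 0" if "\<exists>v\<in>J. c v \<noteq> 0"
    using ell that unfolding elliptic_def zc by blast
  have zero: "z = 0" if "\<not> (\<exists>v\<in>J. c v \<noteq> 0)"
    using that unfolding zc by (simp add: sum.neutral)
  show "bform G z z \<ge> 0" using pos zero by (cases "\<exists>v\<in>J. c v \<noteq> 0") auto
  show "bform G z z = 0 \<Longrightarrow> z = 0" using pos zero by (cases "\<exists>v\<in>J. c v \<noteq> 0") auto
qed

lemma subspace_orthJ: "subspace {p. \<forall>v\<in>J. bform G p v = 0}"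
  unfolding subspace_def by (simp add: bf_simps)

lemma subspace_orth1: "subspace {p. bform G z p = 0}"
  unfolding subspace_def by (simp add: bf_simps)

lemma LS_Zn: assumes "J \<subseteq> Zn" shows "lattice_span J \<subseteq> Zn"
proof
  fix y assume "y \<in> lattice_span J"
  then obtain c where c: "\<forall>v. c v \<in> \<int>" "y = (\<Sum>v\<in>J. c v *\<^sub>R v)" unfolding lattice_span_def by blast
  show "y \<in> Zn" unfolding c(2) using assms c(1) by (intro Zn_sum Zn_scale) auto
qed

lemma LS_orth: assumes "y \<in> lattice_span J" "\<forall>v\<in>J. bform G x v = 0" shows "bform G x y = 0"
proof -
  obtain c where c: "y = (\<Sum>v\<in>J. c v *\<^sub>R v)" using assms(1) unfolding lattice_span_def by blast
  show ?thesis unfolding c using assms(2) by (simp add: bf_simps)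
qed

lemma iso_ext:
  assumes lin: "linear h" and iso: "\<forall>x\<in>Zn. \<forall>y\<in>Zn. bform G (h x) (h y) = bform G x y"
  shows "bform G (h x) (h y) = bform G x y"
proof -
  have sub1: "subspace {x. bform G (h x) (h y) = bform G x y}" for y
    unfolding subspace_def using lin by (simp add: bf_simps linear_add linear_scale linear_0)
  have sub2: "subspace {y. bform G (h x) (h y) = bform G x y}" for x
    unfolding subspace_def using lin by (simp add: bf_simps linear_add linear_scale linear_0)
  have A: "bform G (h x) (h y) = bform G x y" if "y \<in> Zn" for x y
  proof -
    have "x \<in> span Zn" by (simp add: span_Zn)
    then show ?thesis
      by (rule span_induct[where P="\<lambda>x. bform G (h x) (h y) = bform G x y"]) (use sub1 iso that in auto)
  qed
  have "y \<in> span Zn" by (simp add: span_Zn)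
  then show ?thesis
    by (rule span_induct[where P="\<lambda>y. bform G (h x) (h y) = bform G x y"]) (use sub2 A in auto)
qed


lemma LS_orth2: assumes "y \<in> lattice_span S" "\<forall>v\<in>S. bform G v w = 0" shows "bform G y w = 0"
proof -
  obtain c where c: "y = (\<Sum>v\<in>S. c v *\<^sub>R v)" using assms(1) unfolding lattice_span_def by blast
  show ?thesis unfolding c using assms(2) by (simp add: bf_simps)
qed

lemma LS_mono: assumes "S \<subseteq> T" "finite T" shows "lattice_span S \<subseteq> lattice_span T"
proof
  fix y assume "y \<in> lattice_span S"
  then obtain c where c: "\<forall>v. c v \<in> \<int>" "y = (\<Sum>v\<in>S. c v *\<^sub>R v)" unfolding lattice_span_def by blast
  show "y \<in> lattice_span T" unfolding c(2)
    using assms c(1) by (intro LS_sum LS_scale LS_base) auto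
qed

lemma cox_adj_sym: assumes "integral_symmetric G" "cox_adj G J v w" shows "cox_adj G J w v"
  using assms(2) bf_sym[OF assms(1)] unfolding cox_adj_def cox_weight_def by (auto simp: mult.commute)

lemma rtc_sym: assumes "integral_symmetric G" "(cox_adj G J)\<^sup>*\<^sup>* a b" shows "(cox_adj G J)\<^sup>*\<^sup>* b a"
  using assms(2)
proof (induction rule: rtranclp_induct)
  case base then show ?case by simp
next
  case (step y z)
  have "cox_adj G J z y" using cox_adj_sym[OF assms(1) step(2)] .
  then show ?case using step(3) by (rule converse_rtranclp_into_rtranclp)
qed

lemma orth_noncomp:
  assumes GI: "integral_symmetric G" and JR: "J \<subseteq> roots G Zn" and v: "v \<in> J" and w: "w \<in> J"
    and nr: "\<not> (cox_adj G J)\<^sup>*\<^sup>* w v"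
  shows "bform G v w = 0"
proof -
  have "\<not> cox_adj G J w v" using nr by (metis r_into_rtranclp)
  moreover have "w \<noteq> v" using nr by auto
  ultimately have cw: "cox_weight G w v = 0" using v w unfolding cox_adj_def by blast
  have N: "bform G w w \<noteq> 0" "bform G v v \<noteq> 0" using JR v w unfolding roots_def by auto
  have "bform G w v = 0" using cw N unfolding cox_weight_def by simp
  then show ?thesis using bf_sym[OF GI] by metis
qed

lemma comp_same:
  assumes GI: "integral_symmetric G" and K: "K \<in> components G J" and K': "K' \<in> components G J"
    and w: "w \<in> K" and v: "v \<in> K'" and r: "(cox_adj G J)\<^sup>*\<^sup>* w v"
  shows "K = K'"
proof -
  let ?R = "(cox_adj G J)\<^sup>*\<^sup>*"
  obtain a where a: "a \<in> J" "K = {u\<in>J. ?R a u}" using K unfolding components_def by blast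
  obtain a' where a': "a' \<in> J" "K' = {u\<in>J. ?R a' u}" using K' unfolding components_def by blast
  have "?R a w" using w a by blast
  moreover have "?R a' v" using v a' by blast
  ultimately have aa: "?R a a'" using r rtc_sym[OF GI] by (meson rtranclp_trans)
  have "?R a u \<longleftrightarrow> ?R a' u" for u
    using aa rtc_sym[OF GI aa] by (meson rtranclp_trans)
  then show ?thesis using a a' by simp
qed

lemma allowed_typeD:
  assumes "allowed_type G K"
  shows "\<exists>m E. has_type G K m E \<and> goodT m E \<and> treeT m E \<and> 0 < m"
  using assms unfolding allowed_type_def
proof (elim disjE exE conjE)
  assume "has_type G K 1 edges_A1" then show ?thesis using good_A1 tree_A1 by blast
next
  fix n assume "2 \<le> n" "has_type G K (2*n) (edges_D (2*n))"
  moreover have "4 \<le> 2*n" using \<open>2 \<le> n\<close> by simp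
  ultimately show ?thesis using good_D tree_D by fastforce
next
  assume "has_type G K 7 edges_E7" then show ?thesis using good_E7 tree_E7 by fastforce
next
  assume "has_type G K 8 edges_E8" then show ?thesis using good_E8 tree_E8 by fastforce
qed

lemma KIL:
  fixes G :: "real^'n^'n" and J :: "(real^'n) set"
  assumes GI: "integral_symmetric G" and JR: "J \<subseteq> roots G Zn" and fin: "finite J"
    and AT: "\<forall>K\<in>components G J. allowed_type G K"
  shows "\<forall>x\<in>Zn. \<exists>y\<in>lattice_span J. \<forall>w\<in>J. bform G y w = 2 * bform G x w"
proof -
  let ?P = "\<lambda>S. \<forall>x\<in>Zn. \<exists>y\<in>lattice_span S. \<forall>w\<in>S. bform G y w = 2 * bform G x w"
  have compsub: "K \<subseteq> J" if "K \<in> components G J" for K using that unfolding components_def by blast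
  have PK: "?P K" if K: "K \<in> components G J" for K
  proof
    fix x :: "real^'n" assume x: "x \<in> Zn"
    have "allowed_type G K" using AT K by blast
    then obtain m E where mE: "has_type G K m E" "goodT m E" "treeT m E" "0 < m"
      using allowed_typeD by blast
    have KR: "K \<subseteq> roots G Zn" using compsub[OF K] JR by blast
    show "\<exists>y\<in>lattice_span K. \<forall>w\<in>K. bform G y w = 2 * bform G x w"
      by (rule comp_lemma[OF GI KR mE x])
  qed
  have finC: "finite (components G J)" unfolding components_def using fin by simp
  have UC: "\<Union>(components G J) = J"
  proof
    show "\<Union>(components G J) \<subseteq> J" using compsub by blast
    show "J \<subseteq> \<Union>(components G J)"
    proof
      fix v assume "v \<in> J"
      then have "v \<in> {w\<in>J. (cox_adj G J)\<^sup>*\<^sup>* v w}" by simp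
      moreover have "{w\<in>J. (cox_adj G J)\<^sup>*\<^sup>* v w} \<in> components G J" using \<open>v \<in> J\<close> unfolding components_def by blast
      ultimately show "v \<in> \<Union>(components G J)" by blast
    qed
  qed
  have main: "?P (\<Union>\<K>)" if "\<K> \<subseteq> components G J" for \<K>
  proof -
    have "finite \<K>" using finC that finite_subset by blast
    then show ?thesis using that
    proof (induction \<K> rule: finite_induct)
      case empty
      then show ?case using LS_zero by auto
    next
      case (insert K \<K>)
      have K: "K \<in> components G J" using insert.prems by blast
      have KK: "\<K> \<subseteq> components G J" using insert.prems by blast
      have "K \<union> \<Union>\<K> \<subseteq> J" using compsub K KK by blast
      then have finU: "finite (K \<union> \<Union>\<K>)" using fin finite_subset by blast
      have orth: "bform G v w = 0" if vK: "v \<in> K" and wU: "w \<in> \<Union>\<K>" for v w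
      proof -
        obtain K' where K': "K' \<in> \<K>" "w \<in> K'" using wU by blast
        have "K' \<noteq> K" using K' insert.hyps(2) by blast
        have "\<not> (cox_adj G J)\<^sup>*\<^sup>* w v"
          using comp_same[OF GI _ K] K' KK vK \<open>K' \<noteq> K\<close> by blast
        moreover have "v \<in> J" "w \<in> J" using compsub K KK K' vK by blast+
        ultimately show ?thesis using orth_noncomp[OF GI JR] by blast
      qed
      show ?case
      proof
        fix x :: "real^'n" assume x: "x \<in> Zn"
        obtain y1 where y1: "y1 \<in> lattice_span K" "\<forall>w\<in>K. bform G y1 w = 2 * bform G x w"
          using PK[OF K] x by blast
        obtain y2 where y2: "y2 \<in> lattice_span (\<Union>\<K>)" "\<forall>w\<in>\<Union>\<K>. bform G y2 w = 2 * bform G x w"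
          using insert.IH[OF KK] x by blast
        have "y1 \<in> lattice_span (K \<union> \<Union>\<K>)" using LS_mono[OF _ finU, of K] y1(1) by blast
        moreover have "y2 \<in> lattice_span (K \<union> \<Union>\<K>)" using LS_mono[OF _ finU, of "\<Union>\<K>"] y2(1) by blast
        ultimately have "y1 + y2 \<in> lattice_span (\<Union>(insert K \<K>))" using LS_add by simp
        moreover have "\<forall>w\<in>\<Union>(insert K \<K>). bform G (y1 + y2) w = 2 * bform G x w"
        proof
          fix w assume "w \<in> \<Union>(insert K \<K>)"
          then consider "w \<in> K" | "w \<in> \<Union>\<K>" by blast
          then show "bform G (y1 + y2) w = 2 * bform G x w"
          proof cases
            case 1
            have "\<forall>v\<in>\<Union>\<K>. bform G v w = 0"
            proof
              fix v assume "v \<in> \<Union>\<K>"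
              then have "bform G w v = 0" using orth 1 by blast
              then show "bform G v w = 0" using bf_sym[OF GI, of v w] by simp
            qed
            then have "bform G y2 w = 0" using LS_orth2[OF y2(1)] by blast
            then show ?thesis using y1(2) 1 by (simp add: bf_simps)
          next
            case 2
            have "\<forall>v\<in>K. bform G v w = 0" using orth 2 by blast
            then have "bform G y1 w = 0" using LS_orth2[OF y1(1)] by blast
            moreover have "bform G y2 w = 2 * bform G x w" using y2(2) 2 by blast
            ultimately show ?thesis by (simp add: bf_simps)
          qed
        qed
        ultimately show "\<exists>y\<in>lattice_span (\<Union>(insert K \<K>)). \<forall>w\<in>\<Union>(insert K \<K>). bform G y w = 2 * bform G x w"
          by blast
      qed
    qed
  qed
  show ?thesis using main[of "components G J"] UC by simp
qed

locale setupL =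
  fixes G :: "real^'n^'n" and J :: "(real^'n) set"
  assumes GI: "integral_symmetric G" and ell: "elliptic G J" and JR: "J \<subseteq> roots G Zn"
    and KIL: "\<forall>x\<in>Zn. \<exists>y\<in>lattice_span J. \<forall>w\<in>J. bform G y w = 2 * bform G x w"
begin

definition "MM = orth_complement G Zn (lattice_span J)"

lemma finJ: "finite J" using ell unfolding elliptic_def by blast
lemma JZ: "J \<subseteq> Zn" using JR unfolding roots_def by blast
lemma sym: "bform G x y = bform G y x" using bf_sym[OF GI] .

lemma Mchar: "MM = {x\<in>Zn. \<forall>v\<in>J. bform G x v = 0}"
proof
  show "MM \<subseteq> {x\<in>Zn. \<forall>v\<in>J. bform G x v = 0}"
    unfolding MM_def orth_complement_def using LS_base[OF finJ] by blast
  show "{x\<in>Zn. \<forall>v\<in>J. bform G x v = 0} \<subseteq> MM"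
    unfolding MM_def orth_complement_def using LS_orth by blast
qed

lemma MZ: "MM \<subseteq> Zn" using Mchar by blast
lemma M_add: "x \<in> MM \<Longrightarrow> y \<in> MM \<Longrightarrow> x + y \<in> MM" unfolding Mchar by (auto simp: Zn_add bf_simps)
lemma M_diff: "x \<in> MM \<Longrightarrow> y \<in> MM \<Longrightarrow> x - y \<in> MM" unfolding Mchar by (auto simp: Zn_diff bf_simps)
lemma M_scale: "a \<in> \<int> \<Longrightarrow> x \<in> MM \<Longrightarrow> a *\<^sub>R x \<in> MM" unfolding Mchar by (auto simp: Zn_scale bf_simps)
lemma M_zero: "0 \<in> MM" unfolding Mchar by (auto simp: Zn_zero)

lemma spanM_orth: assumes "p \<in> span MM" "v \<in> J" shows "bform G p v = 0"
proof -
  have "p \<in> {p. \<forall>v\<in>J. bform G p v = 0}"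
    using assms(1) by (rule span_induct[where P="\<lambda>p. p \<in> {p. \<forall>v\<in>J. bform G p v = 0}"])
      (use subspace_orthJ[of J G] Mchar in auto)
  then show ?thesis using assms(2) by blast
qed

lemma orth_span: assumes "p \<in> span MM" "z \<in> span J" shows "bform G p z = 0"
  using assms(2) by (rule span_induct[where P="\<lambda>z. bform G p z = 0"])
    (use subspace_orth1[of G p] spanM_orth[OF assms(1)] in auto)

lemma LSJ_Zn: "lattice_span J \<subseteq> Zn" using LS_Zn[OF JZ] .

lemma decomp_Zn: assumes "x \<in> Zn" shows "\<exists>y\<in>lattice_span J. 2 *\<^sub>R x - y \<in> MM"
proof -
  obtain y where y: "y \<in> lattice_span J" "\<forall>w\<in>J. bform G y w = 2 * bform G x w" using KIL assms by blast
  have "2 *\<^sub>R x - y \<in> Zn" using assms y(1) LSJ_Zn by (intro Zn_diff Zn_scale) auto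
  moreover have "\<forall>v\<in>J. bform G (2 *\<^sub>R x - y) v = 0" using y(2) by (simp add: bf_simps)
  ultimately show ?thesis using y(1) unfolding Mchar by blast
qed

lemma decomp: "\<exists>u\<in>span J. p - u \<in> span MM"
proof -
  let ?Q = "\<lambda>p. \<exists>u\<in>span J. p - u \<in> span MM"
  have sub: "subspace (Collect ?Q)"
    unfolding subspace_def
  proof (intro conjI ballI allI)
    have "(0::real^'n) \<in> span J" "0 - 0 \<in> span MM" by (simp_all add: span_zero)
    then show "0 \<in> Collect ?Q" by blast
  next
    fix x y assume "x \<in> Collect ?Q" "y \<in> Collect ?Q"
    then obtain u1 u2 where u: "u1 \<in> span J" "x - u1 \<in> span MM" "u2 \<in> span J" "y - u2 \<in> span MM" by auto
    have "u1 + u2 \<in> span J" using span_add[OF u(1) u(3)] .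
    moreover have e: "(x + y) - (u1 + u2) = (x - u1) + (y - u2)" by (simp add: algebra_simps)
    have "(x + y) - (u1 + u2) \<in> span MM" unfolding e by (rule span_add[OF u(2) u(4)])
    ultimately have "u1 + u2 \<in> span J \<and> (x + y) - (u1 + u2) \<in> span MM" by simp
    then show "x + y \<in> Collect ?Q" by blast
  next
    fix c :: real and x assume "x \<in> Collect ?Q"
    then obtain u where u: "u \<in> span J" "x - u \<in> span MM" by auto
    have "c *\<^sub>R u \<in> span J" using span_scale[OF u(1)] .
    moreover have e: "c *\<^sub>R x - c *\<^sub>R u = c *\<^sub>R (x - u)" by (simp add: algebra_simps)
    have "c *\<^sub>R x - c *\<^sub>R u \<in> span MM" unfolding e by (rule span_scale[OF u(2)])
    ultimately have "c *\<^sub>R u \<in> span J \<and> c *\<^sub>R x - c *\<^sub>R u \<in> span MM" by simp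
    then show "c *\<^sub>R x \<in> Collect ?Q" by blast
  qed
  have "p \<in> span Zn" by (simp add: span_Zn)
  then show ?thesis
  proof (rule span_induct[where P="?Q"])
    show "subspace (Collect ?Q)" by (rule sub)
  next
    fix x :: "real^'n" assume "x \<in> Zn"
    then obtain y where y: "y \<in> lattice_span J" "2 *\<^sub>R x - y \<in> MM" using decomp_Zn by blast
    have "y \<in> span J" using y(1) LS_span by blast
    then have "(1/2) *\<^sub>R y \<in> span J" by (rule span_scale)
    moreover have "x - (1/2) *\<^sub>R y = (1/2) *\<^sub>R (2 *\<^sub>R x - y)" by (simp add: algebra_simps)
    moreover have "(1/2) *\<^sub>R (2 *\<^sub>R x - y) \<in> span MM" using span_scale[OF span_base[OF y(2)]] .
    ultimately show "?Q x" by (metis (no_types, lifting))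
  qed
qed

lemma uniq: assumes "u \<in> span J" "u' \<in> span J" "p - u \<in> span MM" "p - u' \<in> span MM" shows "u = u'"
proof -
  have d1: "u - u' \<in> span J" using span_diff[OF assms(1) assms(2)] .
  have "(p - u') - (p - u) \<in> span MM" using span_diff[OF assms(4) assms(3)] .
  then have d2: "u - u' \<in> span MM" by (simp add: algebra_simps)
  have "bform G (u - u') (u - u') = 0" using orth_span[OF d2 d1] .
  then show ?thesis using elliptic_psd(2)[OF ell d1] by simp
qed

definition "pr p = p - (SOME u. u \<in> span J \<and> p - u \<in> span MM)"

lemma pr_props: "pr p \<in> span MM" "p - pr p \<in> span J"
proof -
  have "\<exists>u. u \<in> span J \<and> p - u \<in> span MM" using decomp by blast
  then have "(SOME u. u \<in> span J \<and> p - u \<in> span MM) \<in> span J \<and> p - (SOME u. u \<in> span J \<and> p - u \<in> span MM) \<in> span MM"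
    by (rule someI_ex)
  then show "pr p \<in> span MM" "p - pr p \<in> span J" unfolding pr_def by auto
qed

lemma pr_char: assumes "u \<in> span J" "p - u \<in> span MM" shows "pr p = p - u"
proof -
  have "p - pr p = u" using uniq[OF pr_props(2) assms(1) _ assms(2)] pr_props(1) by simp
  then show ?thesis by (simp add: algebra_simps)
qed

lemma pr_linear: "linear pr"
proof (rule linearI)
  fix x y
  have "(x - pr x) + (y - pr y) \<in> span J" using span_add[OF pr_props(2) pr_props(2)] .
  moreover have "(x + y) - ((x - pr x) + (y - pr y)) \<in> span MM"
    using pr_props(1)[of x] pr_props(1)[of y] by (simp add: span_add)
  ultimately have "pr (x + y) = (x + y) - ((x - pr x) + (y - pr y))" by (rule pr_char)
  then show "pr (x + y) = pr x + pr y" by simp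
next
  fix c :: real and x
  have "c *\<^sub>R (x - pr x) \<in> span J" using span_scale[OF pr_props(2)] .
  moreover have "c *\<^sub>R x - c *\<^sub>R (x - pr x) = c *\<^sub>R pr x" by (simp add: algebra_simps)
  moreover have "c *\<^sub>R pr x \<in> span MM" using pr_props(1)[of x] by (rule span_scale)
  ultimately have "pr (c *\<^sub>R x) = c *\<^sub>R x - c *\<^sub>R (x - pr x)" by (metis pr_char)
  then show "pr (c *\<^sub>R x) = c *\<^sub>R pr x" by (simp add: algebra_simps)
qed

lemma roots_M: assumes "r \<in> roots G MM" shows "r \<in> roots G Zn"
proof -
  have rM: "r \<in> MM" using assms unfolding roots_def by blast
  have rZ: "r \<in> Zn" using rM MZ by blast
  show ?thesis
  proof (cases "bform G r r = 2")
    case True then show ?thesis using rZ unfolding roots_def by blast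
  next
    case False
    then have r6: "bform G r r = 6" and r3: "\<forall>m\<in>MM. bform G r m / 3 \<in> \<int>" using assms unfolding roots_def by auto
    have "bform G r z / 3 \<in> \<int>" if z: "z \<in> Zn" for z
    proof -
      obtain y where y: "y \<in> lattice_span J" "2 *\<^sub>R z - y \<in> MM" using decomp_Zn[OF z] by blast
      have "bform G r y = 0" using rM y(1) unfolding MM_def orth_complement_def by blast
      then have "bform G r (2 *\<^sub>R z - y) = 2 * bform G r z" by (simp add: bf_simps)
      then have a: "2 * bform G r z / 3 \<in> \<int>" using r3 y(2) by metis
      have b: "bform G r z \<in> \<int>" using bf_int[OF GI rZ z] .
      have "bform G r z / 3 = 2 * (2 * bform G r z / 3) - bform G r z" by simp
      then show ?thesis using a b by (metis Ints_diff Ints_mult Ints_numeral)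
    qed
    then show ?thesis using rZ r6 unfolding roots_def by blast
  qed
qed


definition "gmap h \<longleftrightarrow> linear h \<and> (\<forall>x y. bform G (h x) (h y) = bform G x y) \<and> h ` Zn \<subseteq> Zn \<and> h ` J = J"

lemma h_M: assumes "gmap h" "x \<in> MM" shows "h x \<in> MM"
proof -
  have x: "x \<in> Zn" "\<forall>v\<in>J. bform G x v = 0" using assms(2) Mchar by auto
  have "h x \<in> Zn" using assms(1) x(1) unfolding gmap_def by blast
  moreover have "bform G (h x) v = 0" if v: "v \<in> J" for v
  proof -
    obtain v' where v': "v' \<in> J" "v = h v'" using v assms(1) unfolding gmap_def by blast
    have "bform G (h x) (h v') = bform G x v'" using assms(1) unfolding gmap_def by blast
    then show ?thesis using x(2) v' by simp
  qed
  ultimately show ?thesis unfolding Mchar by blast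
qed

lemma h_spanM: assumes "gmap h" "p \<in> span MM" shows "h p \<in> span MM"
proof -
  have lin: "linear h" using assms(1) unfolding gmap_def by blast
  have "h p \<in> h ` span MM" using assms(2) by blast
  also have "\<dots> = span (h ` MM)" using span_linear_image[OF lin] by simp
  also have "\<dots> \<subseteq> span MM" using h_M[OF assms(1)] by (intro span_mono) blast
  finally show ?thesis .
qed

lemma h_spanJ: assumes "gmap h" "p \<in> span J" shows "h p \<in> span J"
proof -
  have lin: "linear h" and hJ: "h ` J = J" using assms(1) unfolding gmap_def by blast+
  have "h p \<in> h ` span J" using assms(2) by blast
  also have "\<dots> = span (h ` J)" using span_linear_image[OF lin] by simp
  finally show ?thesis using hJ by simp
qed

lemma h_pr: assumes "gmap h" shows "pr (h p) = h (pr p)"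
proof -
  have lin: "linear h" using assms(1) unfolding gmap_def by blast
  have "h (p - pr p) \<in> span J" using h_spanJ[OF assms pr_props(2)] .
  moreover have "h p - h (p - pr p) = h (pr p)" using linear_diff[OF lin] by simp
  moreover have "h (pr p) \<in> span MM" using h_spanM[OF assms pr_props(1)] .
  ultimately show ?thesis using pr_char by metis
qed

lemma gmap_MM_eq: assumes "gmap h" "gmap h'" "\<forall>x. h (h' x) = x" shows "h ` MM = MM"
proof
  show "h ` MM \<subseteq> MM" using h_M[OF assms(1)] by blast
  show "MM \<subseteq> h ` MM"
  proof
    fix x assume "x \<in> MM"
    then have "h' x \<in> MM" using h_M[OF assms(2)] by blast
    moreover have "x = h (h' x)" using assms(3) by simp
    ultimately show "x \<in> h ` MM" by blast
  qed
qed

lemma h_roots: assumes "gmap h" "h ` MM = MM" "r \<in> roots G MM" shows "h r \<in> roots G MM"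
proof -
  have iso: "\<And>x y. bform G (h x) (h y) = bform G x y" using assms(1) unfolding gmap_def by blast
  have rM: "r \<in> MM" using assms(3) unfolding roots_def by blast
  have "h r \<in> MM" using rM assms(2) by blast
  moreover have "bform G (h r) (h r) = 2 \<or> (bform G (h r) (h r) = 6 \<and> (\<forall>m\<in>MM. bform G (h r) m / 3 \<in> \<int>))"
  proof -
    have r: "bform G r r = 2 \<or> (bform G r r = 6 \<and> (\<forall>m\<in>MM. bform G r m / 3 \<in> \<int>))"
      using assms(3) unfolding roots_def by blast
    have "bform G (h r) m / 3 \<in> \<int>" if "\<forall>m\<in>MM. bform G r m / 3 \<in> \<int>" "m \<in> MM" for m
    proof -
      obtain m' where "m' \<in> MM" "m = h m'" using \<open>m \<in> MM\<close> assms(2) by blast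
      then show ?thesis using that(1) iso by simp
    qed
    then show ?thesis using r iso by auto
  qed
  ultimately show ?thesis unfolding roots_def by blast
qed

definition "SS = Upsilon G MM - mirrors G MM"

lemma h_S: assumes "gmap h" "gmap h'" "\<forall>x. h (h' x) = x" "\<forall>x. h' (h x) = x" "p \<in> SS" shows "h p \<in> SS"
proof -
  have iso: "\<And>x y. bform G (h x) (h y) = bform G x y" using assms(1) unfolding gmap_def by blast
  have p: "p \<in> span MM" "bform G p p < 0" "\<forall>r\<in>roots G MM. bform G p r \<noteq> 0"
    using assms(5) unfolding SS_def Upsilon_def mirrors_def by auto
  have "h p \<in> span MM" using h_spanM[OF assms(1) p(1)] .
  moreover have "bform G (h p) (h p) < 0" using p(2) iso by simp
  moreover have "bform G (h p) r \<noteq> 0" if r: "r \<in> roots G MM" for r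
  proof -
    have "h' r \<in> roots G MM" using h_roots[OF assms(2) gmap_MM_eq[OF assms(2) assms(1) assms(4)] r] .
    then have "bform G p (h' r) \<noteq> 0" using p(3) by blast
    moreover have "bform G (h p) r = bform G (h p) (h (h' r))" using assms(3) by simp
    ultimately show ?thesis using iso by simp
  qed
  ultimately show ?thesis unfolding SS_def Upsilon_def mirrors_def by blast
qed

lemma pr_S: assumes "p \<in> Upsilon G Zn - mirrors G Zn" shows "pr p \<in> SS"
proof -
  define u where "u = p - pr p"
  have uJ: "u \<in> span J" unfolding u_def by (rule pr_props(2))
  have pM: "pr p \<in> span MM" by (rule pr_props(1))
  have pp: "bform G p p < 0" "\<forall>r\<in>roots G Zn. bform G p r \<noteq> 0"
    using assms unfolding Upsilon_def mirrors_def by (auto simp: span_Zn)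
  have p_eq: "p = u + pr p" unfolding u_def by simp
  have o1: "bform G (pr p) u = 0" using orth_span[OF pM uJ] .
  have o2: "bform G u (pr p) = 0" using o1 sym by metis
  have "bform G p p = bform G u u + bform G u (pr p) + bform G (pr p) u + bform G (pr p) (pr p)"
    by (subst (1 2) p_eq) (simp add: bf_simps)
  then have "bform G (pr p) (pr p) \<le> bform G p p" using o1 o2 elliptic_psd(1)[OF ell uJ] by simp
  then have neg: "bform G (pr p) (pr p) < 0" using pp(1) by simp
  have "bform G (pr p) r \<noteq> 0" if r: "r \<in> roots G MM" for r
  proof -
    have rM: "r \<in> span MM" using r unfolding roots_def by (blast intro: span_base)
    have "bform G r u = 0" using orth_span[OF rM uJ] .
    then have "bform G u r = 0" using sym by metis
    moreover have "bform G p r \<noteq> 0" using pp(2) roots_M[OF r] by blast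
    moreover have "bform G (pr p) r = bform G p r - bform G u r" unfolding u_def by (simp add: bf_simps)
    ultimately show ?thesis by simp
  qed
  then show ?thesis using pM neg unfolding SS_def Upsilon_def mirrors_def by blast
qed

lemma pr_cont: "continuous_on S pr"
  using pr_linear by (simp add: linear_continuous_on linear_conv_bounded_linear[symmetric])

lemma h_cont: "gmap h \<Longrightarrow> continuous_on S h"
  unfolding gmap_def by (simp add: linear_continuous_on linear_conv_bounded_linear[symmetric])

lemma chamber_part:
  assumes ch: "chamber G Zn C" and gf: "gmap f" and gg: "gmap g"
    and fg: "\<forall>x. f (g x) = x" and gf': "\<forall>x. g (f x) = x" and fC: "f ` C = C"
  shows "\<exists>C'. chamber G MM C' \<and> f ` C' = C'"
proof -
  let ?S0 = "Upsilon G Zn - mirrors G Zn"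
  obtain q where q: "q \<in> ?S0" "C = connected_component_set ?S0 q" using ch unfolding chamber_def by blast
  have CS: "C \<subseteq> ?S0" using q(2) connected_component_subset by metis
  have qC: "q \<in> C" using q by simp
  have Cconn: "connected C" using q(2) connected_connected_component by metis
  define C' where "C' = connected_component_set SS (pr q)"
  have prq: "pr q \<in> SS" using pr_S[OF q(1)] .
  have ch': "chamber G MM C'" unfolding chamber_def C'_def using prq unfolding SS_def by blast
  have C'S: "C' \<subseteq> SS" unfolding C'_def using connected_component_subset by metis
  have prC: "pr ` C \<subseteq> C'" unfolding C'_def
  proof (rule connected_component_maximal)
    show "pr q \<in> pr ` C" using qC by blast
    show "connected (pr ` C)" using connected_continuous_image[OF pr_cont Cconn] .
    show "pr ` C \<subseteq> SS" using CS pr_S by blast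
  qed
  have hC': "h ` C' \<subseteq> C'" if gh: "gmap h" and gh': "gmap h'" and hh': "\<forall>x. h (h' x) = x"
    and h'h: "\<forall>x. h' (h x) = x" and hC: "h ` C \<subseteq> C" for h h'
  proof -
    have "pr (h q) \<in> C'" using prC hC qC by blast
    then have eq: "connected_component_set SS (pr (h q)) = C'" unfolding C'_def by (rule connected_component_eq)
    have "h ` C' \<subseteq> connected_component_set SS (pr (h q))"
    proof (rule connected_component_maximal)
      show "pr (h q) \<in> h ` C'" unfolding h_pr[OF gh] C'_def using prq by simp
      show "connected (h ` C')" unfolding C'_def
        using connected_continuous_image[OF h_cont[OF gh] connected_connected_component] .
      show "h ` C' \<subseteq> SS" using C'S h_S[OF gh gh' hh' h'h] by blast
    qed
    then show ?thesis using eq by simp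
  qed
  have gC: "g ` C \<subseteq> C"
  proof
    fix y assume "y \<in> g ` C"
    then obtain x where x: "x \<in> C" "y = g x" by blast
    then obtain z where "z \<in> C" "x = f z" using fC by blast
    then show "y \<in> C" using x gf' by simp
  qed
  have 1: "f ` C' \<subseteq> C'" using hC'[OF gf gg fg gf'] fC by simp
  have 2: "g ` C' \<subseteq> C'" using hC'[OF gg gf gf' fg gC] .
  have "f ` C' = C'"
  proof
    show "f ` C' \<subseteq> C'" by (rule 1)
    show "C' \<subseteq> f ` C'"
    proof
      fix x assume "x \<in> C'"
      then have "g x \<in> C'" using 2 by blast
      moreover have "x = f (g x)" using fg by simp
      ultimately show "x \<in> f ` C'" by blast
    qed
  qed
  then show ?thesis using ch' by blast
qed

lemma z3_part:
  assumes gf: "gmap f" and z3: "Z3_reversing G Zn f"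
  shows "Z3_reversing G MM f"
  unfolding Z3_reversing_def
proof
  fix x assume "x \<in> discr_part G MM 3"
  then have xs: "x \<in> span MM" and xd: "\<forall>m\<in>MM. bform G x m \<in> \<int>" and "\<exists>k::nat. (real 3 ^ k) *\<^sub>R x \<in> MM"
    unfolding discr_part_def dual_lattice_def by auto
  then obtain k :: nat where xk: "(3 ^ k) *\<^sub>R x \<in> MM" by auto
  have lin: "linear f" using gf unfolding gmap_def by blast
  define \<xi> where "\<xi> = x - (3 ^ k) *\<^sub>R x"
  define j :: nat where "j = (3 ^ k - 1) div 2"
  have "odd ((3::nat) ^ k)" by simp
  then have j3: "(3::nat) ^ k = 2 * j + 1" unfolding j_def by presburger
  then have j3r: "(3::real) ^ k = 2 * real j + 1" by (metis of_nat_numeral of_nat_power of_nat_Suc of_nat_mult of_nat_add of_nat_1)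
  have \<xi>M: "\<xi> \<in> span MM" unfolding \<xi>_def using xs by (intro span_diff span_scale)
  have "\<xi> \<in> discr_part G Zn 3"
    unfolding discr_part_def dual_lattice_def
  proof (intro CollectI conjI ballI)
    show "\<xi> \<in> span Zn" by (simp add: span_Zn)
  next
    fix z :: "real^'n" assume z: "z \<in> Zn"
    obtain y where y: "y \<in> lattice_span J" "2 *\<^sub>R z - y \<in> MM" using decomp_Zn[OF z] by blast
    have "y \<in> span J" using y(1) LS_span by blast
    then have "bform G x y = 0" using orth_span[OF xs] by blast
    moreover have "bform G x (2 *\<^sub>R z - y) \<in> \<int>" using xd y(2) by blast
    ultimately have "2 * bform G x z \<in> \<int>" by (simp add: bf_simps)
    moreover have "bform G \<xi> z = - real j * (2 * bform G x z)"
      unfolding \<xi>_def using j3r by (simp add: bf_simps algebra_simps)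
    ultimately show "bform G \<xi> z \<in> \<int>" by (metis Ints_minus Ints_mult Ints_of_nat)
  next
    have "(3 ^ k) *\<^sub>R \<xi> = (3 ^ k) *\<^sub>R x - (3 ^ k) *\<^sub>R ((3 ^ k) *\<^sub>R x)" unfolding \<xi>_def by (simp add: algebra_simps)
    also have "\<dots> \<in> MM" by (rule M_diff[OF xk M_scale[OF _ xk]]) simp
    finally have "(real 3 ^ k) *\<^sub>R \<xi> \<in> Zn" using MZ by auto
    then show "\<exists>k::nat. (real 3 ^ k) *\<^sub>R \<xi> \<in> Zn" by blast
  qed
  then have A: "f \<xi> + \<xi> \<in> Zn" using z3 unfolding Z3_reversing_def by blast
  have "f \<xi> \<in> span MM" using h_spanM[OF gf \<xi>M] .
  then have "\<forall>v\<in>J. bform G (f \<xi> + \<xi>) v = 0" using spanM_orth \<xi>M by (simp add: bf_simps)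
  then have B: "f \<xi> + \<xi> \<in> MM" using A unfolding Mchar by blast
  have C: "f ((3 ^ k) *\<^sub>R x) + (3 ^ k) *\<^sub>R x \<in> MM" using h_M[OF gf xk] xk by (rule M_add)
  have "f x + x = (f \<xi> + \<xi>) + (f ((3 ^ k) *\<^sub>R x) + (3 ^ k) *\<^sub>R x)"
  proof -
    have "x = \<xi> + (3 ^ k) *\<^sub>R x" unfolding \<xi>_def by simp
    then have "f x = f \<xi> + f ((3 ^ k) *\<^sub>R x)" by (metis linear_add[OF lin])
    then show ?thesis unfolding \<xi>_def by (simp add: algebra_simps)
  qed
  then show "f x + x \<in> MM" using M_add[OF B C] by simp
qed

end

theorem lemma2p8:
  fixes G :: "real^'n^'n" and C J :: "(real^'n) set" and f :: "real^'n \<Rightarrow> real^'n"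
  assumes "integral_symmetric G"
    and "even_lattice G Zn"
    and "hyperbolic G Zn"
    and "discr_condition G Zn"
    and "chamber G Zn C"
    and "J \<subseteq> wall_roots G Zn C"
    and "elliptic G J"
    and "\<forall>K\<in>components G J. allowed_type G K"
    and "achiral G Zn"
    and "lattice_aut G Zn f" and "P_direct C f" and "Z3_reversing G Zn f"
    and "f ` wall_roots G Zn C = wall_roots G Zn C"
    and "f ` J = J"
  shows "achiral G (orth_complement G Zn (lattice_span J))"
proof -
  note GI = assms(1) and ch = assms(5) and JW = assms(6) and ell = assms(7) and AT = assms(8)
  note la = assms(10) and pd = assms(11) and z3 = assms(12) and fJ = assms(14)
  have JR: "J \<subseteq> roots G Zn" using JW unfolding wall_roots_def by blast
  have finJ: "finite J" using ell unfolding elliptic_def by blast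
  interpret L: setupL G J
    by (unfold_locales) (use GI ell JR KIL[OF GI JR finJ AT] in auto)
  have lin: "linear f" and fZ: "f ` Zn = Zn" and isoZ: "\<forall>x\<in>Zn. \<forall>y\<in>Zn. bform G (f x) (f y) = bform G x y"
    using la unfolding lattice_aut_def by auto
  have iso: "bform G (f x) (f y) = bform G x y" for x y using iso_ext[OF lin isoZ] .
  have surj: "surj f"
  proof -
    have "range f \<supseteq> f ` span Zn" by blast
    also have "f ` span Zn = span (f ` Zn)" using span_linear_image[OF lin] by simp
    also have "\<dots> = UNIV" using fZ span_Zn by simp
    finally show ?thesis by blast
  qed
  obtain g where glin: "linear g" and gf: "\<forall>x. g (f x) = x" and fg: "\<forall>x. f (g x) = x"
    using linear_surjective_isomorphism[OF lin surj] by blast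
  have gmf: "L.gmap f" unfolding L.gmap_def using lin iso fZ fJ by blast
  have gmg: "L.gmap g" unfolding L.gmap_def
  proof (intro conjI allI)
    show "linear g" by (rule glin)
    show "bform G (g x) (g y) = bform G x y" for x y using iso[of "g x" "g y"] fg by simp
    show "g ` Zn \<subseteq> Zn"
    proof
      fix y assume "y \<in> g ` Zn"
      then obtain x where x: "x \<in> Zn" "y = g x" by blast
      then obtain z where "z \<in> Zn" "x = f z" using fZ by blast
      then show "y \<in> Zn" using x gf by simp
    qed
    show "g ` J = J"
    proof
      show "g ` J \<subseteq> J"
      proof
        fix y assume "y \<in> g ` J"
        then obtain x where x: "x \<in> J" "y = g x" by blast
        then obtain z where "z \<in> J" "x = f z" using fJ by blast
        then show "y \<in> J" using x gf by simp
      qed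
      show "J \<subseteq> g ` J"
      proof
        fix x assume "x \<in> J"
        then have "f x \<in> J" using fJ by blast
        moreover have "x = g (f x)" using gf by simp
        ultimately show "x \<in> g ` J" by blast
      qed
    qed
  qed
  have fC: "f ` C = C" using pd unfolding P_direct_def .
  obtain C' where C': "chamber G L.MM C'" "f ` C' = C'"
    using L.chamber_part[OF ch gmf gmg fg gf fC] by blast
  have "lattice_aut G L.MM f"
    unfolding lattice_aut_def using lin L.gmap_MM_eq[OF gmf gmg fg] iso by blast
  moreover have "Z3_reversing G L.MM f" using L.z3_part[OF gmf z3] .
  ultimately have "achiral G L.MM" unfolding achiral_def P_direct_def using C' by blast
  then show ?thesis unfolding L.MM_def .
qed

end
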